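(* Let $\mathsf{X}=\mathbb{R}^d$ with a probability measure $\mu$, let $(\mathsf{Y},\nu)$ be a Polish probability space, let $c:\mathsf{X}\times\mathsf{Y}\to[0,\infty)$ be continuous and differentiable in $x$ with $\nabla_x c$ continuous, let $\pi_\varepsilon$ be the $(c,\varepsilon)$-cyclically invariant coupling for each $\varepsilon>0$ (assumed to exist), and assume $\pi_\varepsilon\to\pi_*$ weakly as $\varepsilon\to0$ for some $\pi_*\in\Pi(\mu,\nu)$; let $\Gamma:=\operatorname{spt}\pi_*$ and $\mathsf{X}_0:=\operatorname{proj}_{\mathsf{X}}\Gamma$. Let $x\in\operatorname{Int}\mathsf{X}_0$ and $y\in\mathsf{Y}$. Let $\pi_*$ be given by a transport map $T:\mathsf{X}_0\to\mathsf{Y}$ (i.e., $\Gamma=\{(x',T(x')):x'\in\mathsf{X}_0\}$) which is continuous at $x$. If $\nabla_x c(x,y)-\nabla_x c(x,T(x))\neq0$, then $I(x,y)>0$.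
   Context: $\Pi(\mu,\nu)$ is the set of couplings of $\mu,\nu$ and $P:=\mu\otimes\nu$. A coupling $\pi$ is $(c,\varepsilon)$-cyclically invariant if $\pi\sim P$ and its density admits a version $\frac{d\pi}{dP}:\mathsf{X}\times\mathsf{Y}\to(0,\infty)$ with $\prod_{i=1}^k\frac{d\pi}{dP}(x_i,y_i)=\exp\big(-\frac1\varepsilon[\sum_{i=1}^k c(x_i,y_i)-\sum_{i=1}^k c(x_i,y_{i+1})]\big)\prod_{i=1}^k\frac{d\pi}{dP}(x_i,y_{i+1})$ for all $k$ and points, $y_{k+1}:=y_1$. The function $I$ is $I(x,y):=\sup_{k\ge2}\sup_{(x_i,y_i)_{i=2}^k\subset\Gamma}\sup_{\sigma\in\Sigma(k)}\sum_{i=1}^k c(x_i,y_i)-\sum_{i=1}^k c(x_i,y_{\sigma(i)})$ with $(x_1,y_1):=(x,y)$ and $\Sigma(k)$ the permutations of $\{1,\dots,k\}$. *)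

theory Defs
  imports "HOL-Probability.Probability"
begin

definition couplings :: "'a::topological_space measure \<Rightarrow> 'b::topological_space measure \<Rightarrow> ('a \<times> 'b) measure set" where
  "couplings \<mu> \<nu> = {\<pi>. prob_space \<pi> \<and> sets \<pi> = sets (borel :: ('a \<times> 'b) measure)
      \<and> distr \<pi> \<mu> fst = \<mu> \<and> distr \<pi> \<nu> snd = \<nu>}"

definition cyclically_invariant ::
  "('a::topological_space \<Rightarrow> 'b::topological_space \<Rightarrow> real) \<Rightarrow> real \<Rightarrow> 'a measure \<Rightarrow> 'b measure \<Rightarrow> ('a \<times> 'b) measure \<Rightarrow> bool" where
  "cyclically_invariant c \<epsilon> \<mu> \<nu> \<pi> \<longleftrightarrow> \<pi> \<in> couplings \<mu> \<nu> \<and>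
     (\<exists>f :: 'a \<times> 'b \<Rightarrow> real. f \<in> borel_measurable (\<mu> \<Otimes>\<^sub>M \<nu>) \<and> (\<forall>z. f z > 0)
        \<and> \<pi> = density (\<mu> \<Otimes>\<^sub>M \<nu>) (\<lambda>z. ennreal (f z))
        \<and> (\<forall>(k::nat) (xs :: nat \<Rightarrow> 'a) (ys :: nat \<Rightarrow> 'b). k \<ge> 1 \<longrightarrow>
             (\<Prod>i<k. f (xs i, ys i)) =
             exp (- (1 / \<epsilon>) * ((\<Sum>i<k. c (xs i) (ys i)) - (\<Sum>i<k. c (xs i) (ys (Suc i mod k)))))
             * (\<Prod>i<k. f (xs i, ys (Suc i mod k)))))"

definition spt :: "'a::topological_space measure \<Rightarrow> 'a set" where
  "spt M = {z. \<forall>U. open U \<longrightarrow> z \<in> U \<longrightarrow> emeasure M U > 0}"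

definition weak_conv_at0 :: "(real \<Rightarrow> 'a::topological_space measure) \<Rightarrow> 'a measure \<Rightarrow> bool" where
  "weak_conv_at0 \<pi> \<pi>' \<longleftrightarrow> (\<forall>g :: 'a \<Rightarrow> real. continuous_on UNIV g \<and> bounded (range g) \<longrightarrow>
      ((\<lambda>\<epsilon>. \<integral>z. g z \<partial>\<pi> \<epsilon>) \<longlongrightarrow> (\<integral>z. g z \<partial>\<pi>')) (at_right 0))"

definition cycI :: "('a \<Rightarrow> 'b \<Rightarrow> real) \<Rightarrow> ('a \<times> 'b) set \<Rightarrow> 'a \<Rightarrow> 'b \<Rightarrow> ereal" where
  "cycI c \<Gamma> x y = (SUP (k, xs, ys, \<sigma>) \<in> {(k::nat, xs :: nat \<Rightarrow> 'a, ys :: nat \<Rightarrow> 'b, \<sigma>). k \<ge> 2 \<and> xs 0 = x \<and> ys 0 = y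
        \<and> (\<forall>i\<in>{1..<k}. (xs i, ys i) \<in> \<Gamma>) \<and> (\<sigma> :: nat \<Rightarrow> nat) permutes {0..<k}}.
      ereal ((\<Sum>i<k. c (xs i) (ys i)) - (\<Sum>i<k. c (xs i) (ys (\<sigma> i)))))"

end

theory Submission
  imports Defs
begin

theorem lemma5p2:
  fixes \<mu> :: "'a::euclidean_space measure" and \<nu> :: "'b::polish_space measure"
    and c :: "'a \<Rightarrow> 'b \<Rightarrow> real" and Dc :: "'a \<Rightarrow> 'b \<Rightarrow> 'a"
    and \<pi> :: "real \<Rightarrow> ('a \<times> 'b) measure" and \<pi>s :: "('a \<times> 'b) measure"
    and T :: "'a \<Rightarrow> 'b" and x :: 'a and y :: 'b
  assumes mu: "prob_space \<mu>" "sets \<mu> = sets borel"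
    and nu: "prob_space \<nu>" "sets \<nu> = sets borel"
    and c_nonneg: "\<And>x y. c x y \<ge> 0"
    and c_cont: "continuous_on UNIV (\<lambda>(x, y). c x y)"
    and c_grad: "\<And>x y. ((\<lambda>x'. c x' y) has_derivative (\<lambda>h. Dc x y \<bullet> h)) (at x)"
    and Dc_cont: "continuous_on UNIV (\<lambda>(x, y). Dc x y)"
    and pi_eps: "\<And>\<epsilon>. \<epsilon> > 0 \<Longrightarrow> cyclically_invariant c \<epsilon> \<mu> \<nu> (\<pi> \<epsilon>)"
    and pis: "\<pi>s \<in> couplings \<mu> \<nu>"
    and conv: "weak_conv_at0 \<pi> \<pi>s"
    and T_map: "spt \<pi>s = {(x', T x') | x'. x' \<in> fst ` spt \<pi>s}"
    and T_cont: "continuous (at x within fst ` spt \<pi>s) T"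
    and x_int: "x \<in> interior (fst ` spt \<pi>s)"
    and grad_ne: "Dc x y - Dc x (T x) \<noteq> 0"
  shows "cycI c (spt \<pi>s) x y > 0"
proof -
  define X0 where "X0 = fst ` spt \<pi>s"
  define w where "w = Dc x y - Dc x (T x)"
  have wne: "w \<noteq> 0" using grad_ne w_def by simp
  have nw: "norm w > 0" using wne by simp
  define e where "e = norm w / 4"
  have e: "e > 0" unfolding e_def using nw by simp
  have cDc: "isCont (\<lambda>p. Dc (fst p) (snd p)) p" for p
    using Dc_cont by (cases p) (auto simp: continuous_on_eq_continuous_at case_prod_unfold)
  obtain d1 where d1: "d1 > 0" "\<And>p. dist p (x, T x) < d1 \<Longrightarrow> dist (Dc (fst p) (snd p)) (Dc x (T x)) < e"
    using cDc[of "(x, T x)", unfolded continuous_at_eps_delta] e by fastforce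
  obtain d2 where d2: "d2 > 0" "\<And>p. dist p (x, y) < d2 \<Longrightarrow> dist (Dc (fst p) (snd p)) (Dc x y) < e"
    using cDc[of "(x, y)", unfolded continuous_at_eps_delta] e by fastforce
  obtain d3 where d3: "d3 > 0" "ball x d3 \<subseteq> X0"
    using x_int unfolding X0_def by (meson mem_interior)
  obtain d4 where d4: "d4 > 0" "\<And>x'. x' \<in> X0 \<Longrightarrow> dist x' x < d4 \<Longrightarrow> dist (T x') (T x) < d1/2"
    using T_cont[unfolded continuous_within_eps_delta] d1(1) unfolding X0_def
    by (metis half_gt_zero)
  define d where "d = min (min (d1/2) d2) (min d3 d4)"
  have d: "d > 0" "d \<le> d1/2" "d \<le> d2" "d \<le> d3" "d \<le> d4"
    using d1 d2 d3 d4 by (auto simp: d_def)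
  define t where "t = d / (2 * norm w)"
  have t: "t > 0" using d nw t_def by simp
  define x1 where "x1 = x - t *\<^sub>R w"
  have nx1: "norm (x1 - x) = d/2" using nw d by (simp add: x1_def t_def)
  have dx1: "dist x1 x < d" using nx1 d by (simp add: dist_norm)
  have x1X0: "x1 \<in> X0" using d3 dx1 d by (auto simp: dist_commute)
  define z where "z = T x1"
  have dz: "dist z (T x) < d1/2" using d4(2)[OF x1X0] dx1 d by (simp add: z_def)
  have zspt: "(x1, z) \<in> spt \<pi>s" using T_map x1X0 unfolding X0_def z_def by blast
  define S where "S = closed_segment x x1"
  have Sd: "dist \<xi> x \<le> d/2" if "\<xi> \<in> S" for \<xi>
  proof -
    have "dist \<xi> x \<le> dist x x1"
      using that unfolding S_def
      by (metis dist_commute dist_in_closed_segment)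
    then show ?thesis using nx1 by (simp add: dist_norm norm_minus_commute)
  qed
  define f where "f x' = c x' z - c x' y + w \<bullet> x'" for x'
  define f' where "f' \<xi> = (\<lambda>h. (Dc \<xi> z - Dc \<xi> y + w) \<bullet> h)" for \<xi>
  have derf: "(f has_derivative f' \<xi>) (at \<xi> within S)" for \<xi>
  proof -
    have "(f has_derivative (\<lambda>h. Dc \<xi> z \<bullet> h - Dc \<xi> y \<bullet> h + w \<bullet> h)) (at \<xi>)"
      unfolding f_def
      by (intro derivative_intros c_grad)
    then have "(f has_derivative f' \<xi>) (at \<xi>)"
    proof -
      have "(\<lambda>h. Dc \<xi> z \<bullet> h - Dc \<xi> y \<bullet> h + w \<bullet> h) = f' \<xi>"
        by (simp add: f'_def fun_eq_iff inner_add_left inner_diff_left)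
      with \<open>(f has_derivative (\<lambda>h. Dc \<xi> z \<bullet> h - Dc \<xi> y \<bullet> h + w \<bullet> h)) (at \<xi>)\<close> show ?thesis by simp
    qed
    then show ?thesis by (rule has_derivative_at_withinI)
  qed
  have B: "onorm (f' \<xi>) \<le> 2 * e" if "\<xi> \<in> S" for \<xi>
  proof -
    have dxi: "dist \<xi> x \<le> d/2" using Sd that .
    have p1: "dist (\<xi>, z) (x, T x) < d1"
    proof -
      have "dist (\<xi>, z) (x, T x) \<le> dist \<xi> x + dist z (T x)"
        unfolding dist_Pair_Pair by (rule real_sqrt_sum_squares_triangle_ineq[of _ 0 0, simplified, THEN order_trans]; (simp add: sqrt_sum_squares_le_sum_abs)?)
      then show ?thesis using dxi dz d by linarith
    qed
    have p2: "dist (\<xi>, y) (x, y) < d2" using dxi d by (simp add: dist_Pair_Pair)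
    have a1: "norm (Dc \<xi> z - Dc x (T x)) < e" using d1(2)[OF p1] by (simp add: dist_norm)
    have a2: "norm (Dc \<xi> y - Dc x y) < e" using d2(2)[OF p2] by (simp add: dist_norm)
    have eq: "Dc \<xi> z - Dc \<xi> y + w = (Dc \<xi> z - Dc x (T x)) - (Dc \<xi> y - Dc x y)"
      by (simp add: w_def algebra_simps)
    have nv: "norm (Dc \<xi> z - Dc \<xi> y + w) \<le> 2 * e"
      unfolding eq using a1 a2 norm_triangle_ineq4[of "Dc \<xi> z - Dc x (T x)" "Dc \<xi> y - Dc x y"] by linarith
    show ?thesis unfolding f'_def
    proof (rule onorm_le)
      fix h
      have "norm ((Dc \<xi> z - Dc \<xi> y + w) \<bullet> h) \<le> norm (Dc \<xi> z - Dc \<xi> y + w) * norm h"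
        using Cauchy_Schwarz_ineq2 by simp
      also have "\<dots> \<le> 2 * e * norm h" using nv by (simp add: mult_right_mono)
      finally show "norm ((Dc \<xi> z - Dc \<xi> y + w) \<bullet> h) \<le> 2 * e * norm h" .
    qed
  qed
  have bnd: "norm (f x1 - f x) \<le> 2 * e * norm (x1 - x)"
  proof (rule differentiable_bound[of S f f' "2*e"])
    show "convex S" unfolding S_def by simp
    show "x1 \<in> S" "x \<in> S" unfolding S_def by auto
  qed (use derf B in auto)
  define \<phi> where "\<phi> = c x y + c x1 z - (c x z + c x1 y)"
  have fdiff: "f x1 - f x = \<phi> + w \<bullet> (x1 - x)"
    by (simp add: f_def \<phi>_def inner_diff_right)
  have wx: "w \<bullet> (x1 - x) = - t * (norm w)^2"
    by (simp add: x1_def power2_norm_eq_inner)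
  have "norm w * norm (x1 - x) = t * (norm w)^2"
    using nx1 nw by (simp add: t_def power2_eq_square)
  then have "2 * e * norm (x1 - x) = t * (norm w)^2 / 2" by (simp add: e_def)
  with bnd fdiff wx have "\<bar>\<phi> - t * (norm w)^2\<bar> \<le> t * (norm w)^2 / 2" by simp
  moreover have "t * (norm w)^2 > 0" using t nw by simp
  ultimately have phipos: "\<phi> > 0" by linarith
  define xs where "xs = (\<lambda>i::nat. if i = 0 then x else x1)"
  define ys where "ys = (\<lambda>i::nat. if i = 0 then y else z)"
  define \<sigma> where "\<sigma> = Transposition.transpose (0::nat) 1"
  have mem: "(2::nat, xs, ys, \<sigma>) \<in> {(k::nat, xs :: nat \<Rightarrow> 'a, ys :: nat \<Rightarrow> 'b, \<sigma>). k \<ge> 2 \<and> xs 0 = x \<and> ys 0 = y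
        \<and> (\<forall>i\<in>{1..<k}. (xs i, ys i) \<in> spt \<pi>s) \<and> (\<sigma> :: nat \<Rightarrow> nat) permutes {0..<k}}"
  proof -
    have "{1..<2::nat} = {1}" by auto
    moreover have "\<sigma> permutes {0..<2}" unfolding \<sigma>_def by (rule permutes_swap_id) auto
    ultimately show ?thesis using zspt by (simp add: xs_def ys_def)
  qed
  have val: "(\<Sum>i<2. c (xs i) (ys i)) - (\<Sum>i<2. c (xs i) (ys (\<sigma> i))) = \<phi>"
    by (simp add: xs_def ys_def \<sigma>_def \<phi>_def numeral_2_eq_2 lessThan_Suc)
  have "ereal \<phi> \<le> cycI c (spt \<pi>s) x y"
    unfolding cycI_def
    by (rule SUP_upper2[OF mem]) (simp add: val)
  then show ?thesis using phipos by (meson ereal_less(2) less_le_trans)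
qed

end
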